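(* Let $N\ge 2$, $x_0<x_1<\dots<x_N$, $I=[x_0,x_N]$, $I_i=[x_{i-1},x_i)$ for $i<N$, $I_N=[x_{N-1},x_N]$. For $i=1,\dots,N$ let $L_i(x)=a_ix+b_i$ with $a_i=\frac{x_i-x_{i-1}}{x_N-x_0}$, $b_i=\frac{x_Nx_{i-1}-x_0x_i}{x_N-x_0}$, let $\alpha_i\in(-1,1)$, and let $q_i:I\to\mathbb{R}$ be Lipschitz continuous. Let $f$ be the unique bounded function on $I$ with $f(x)=\alpha_if(L_i^{-1}(x))+q_i(L_i^{-1}(x))$ for $x\in I_i$, $i=1,\dots,N$. Then the set of points of discontinuity of $f$ has Lebesgue measure zero; in particular $f$ is Riemann integrable on $I$. *)

theory Defs
  imports "HOL-Analysis.Analysis"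
begin

definition riemann_integrable_on :: "(real \<Rightarrow> real) \<Rightarrow> real \<Rightarrow> real \<Rightarrow> bool" where
  "riemann_integrable_on f a b \<longleftrightarrow>
     (\<exists>J. \<forall>e>0. \<exists>d>0. \<forall>D. D tagged_division_of {a..b} \<and> (\<forall>(t,K)\<in>D. diameter K < d) \<longrightarrow>
        \<bar>(\<Sum>(t,K)\<in>D. Henstock_Kurzweil_Integration.content K * f t) - J\<bar> < e)"

end

theory Submission
  imports Defs
begin

definition regl :: "(real \<Rightarrow> real) \<Rightarrow> real \<Rightarrow> real \<Rightarrow> real \<Rightarrow> bool" where
  "regl g a b e \<longleftrightarrow> (\<exists>F \<delta>. finite F \<and> \<delta> > 0 \<and> (\<forall>s\<in>{a..b}. \<forall>t\<in>{a..b}. \<bar>s - t\<bar> < \<delta> \<longrightarrow>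
      (\<forall>p\<in>F. p < min s t \<or> max s t < p) \<longrightarrow> \<bar>g s - g t\<bar> \<le> e))"

lemma regl_mono: "regl g a b e \<Longrightarrow> e \<le> e' \<Longrightarrow> regl g a b e'"
  unfolding regl_def by (meson order_trans)

lemma disc_countable:
  assumes R: "\<And>e. e > 0 \<Longrightarrow> regl g a b e"
  shows "countable {y \<in> {a..b}. \<not> continuous (at y within {a..b}) g}"
proof -
  have "\<forall>n::nat. \<exists>F \<delta>. finite F \<and> \<delta> > 0 \<and> (\<forall>s\<in>{a..b}. \<forall>t\<in>{a..b}. \<bar>s - t\<bar> < \<delta> \<longrightarrow>
      (\<forall>p\<in>F. p < min s t \<or> max s t < p) \<longrightarrow> \<bar>g s - g t\<bar> \<le> 1 / (Suc n))"
    using R unfolding regl_def by simp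
  then obtain F \<delta> where F: "\<And>n. finite (F n)" and d: "\<And>n. \<delta> n > 0"
    and FD: "\<And>n s t. s\<in>{a..b} \<Longrightarrow> t\<in>{a..b} \<Longrightarrow> \<bar>s - t\<bar> < \<delta> n \<Longrightarrow>
      (\<forall>p\<in>F n. p < min s t \<or> max s t < p) \<Longrightarrow> \<bar>g s - g t\<bar> \<le> 1 / (Suc n)"
    by metis
  have "{y \<in> {a..b}. \<not> continuous (at y within {a..b}) g} \<subseteq> (\<Union>n. F n)"
  proof (rule subsetI, rule ccontr)
    fix y assume y: "y \<in> {y \<in> {a..b}. \<not> continuous (at y within {a..b}) g}" and ny: "y \<notin> (\<Union>n. F n)"
    have "continuous (at y within {a..b}) g"
      unfolding continuous_within_eps_delta
    proof (intro allI impI)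
      fix e :: real assume e: "e > 0"
      obtain n where n: "1 / real (Suc n) < e"
        by (metis e nat_approx_posE of_nat_Suc)
      obtain r where r: "r > 0" "\<And>p. p \<in> F n \<Longrightarrow> p \<noteq> y \<Longrightarrow> r \<le> dist y p"
        using finite_set_avoid[OF F[of n]] by metis
      show "\<exists>d>0. \<forall>x'\<in>{a..b}. dist x' y < d \<longrightarrow> dist (g x') (g y) < e"
      proof (intro exI[of _ "min r (\<delta> n)"] conjI ballI impI)
        show "0 < min r (\<delta> n)" using r d by simp
        fix x' assume x': "x' \<in> {a..b}" "dist x' y < min r (\<delta> n)"
        have "\<forall>p\<in>F n. p < min x' y \<or> max x' y < p"
        proof
          fix p assume p: "p \<in> F n"
          then have "p \<noteq> y" using ny by auto
          then have "r \<le> \<bar>y - p\<bar>" using r p by (simp add: dist_real_def)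
          then show "p < min x' y \<or> max x' y < p" using x'(2) by (auto simp: dist_real_def)
        qed
        then have "\<bar>g x' - g y\<bar> \<le> 1 / (Suc n)"
          using FD[of x' y n] x' y by (auto simp: dist_real_def)
        then show "dist (g x') (g y) < e" using n by (simp add: dist_real_def)
      qed
    qed
    then show False using y by simp
  qed
  moreover have "countable (\<Union>n. F n)" using F by (simp add: countable_finite)
  ultimately show ?thesis using countable_subset by blast
qed


lemma integrable_of_countable_disc:
  fixes g :: "real \<Rightarrow> real"
  assumes ab: "a < b" and M: "\<And>y. y \<in> {a..b} \<Longrightarrow> \<bar>g y\<bar> \<le> M"
    and C: "countable {y \<in> {a..b}. \<not> continuous (at y within {a..b}) g}"
  shows "g integrable_on {a..b}"
proof -
  define D where "D = {y \<in> {a..b}. \<not> continuous (at y within {a..b}) g}"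
  define h :: "nat \<Rightarrow> real" where "h n = (b - a) / Suc n" for n
  have hpos: "h n > 0" for n using ab by (simp add: h_def)
  define G where "G n y = g (a + h n * of_int \<lfloor>(y - a) / h n\<rfloor>)" for n y
  have meas: "G n \<in> borel_measurable lebesgue" for n
  proof -
    have fl: "(\<lambda>y. \<lfloor>(y - a) / h n\<rfloor>) \<in> lebesgue \<rightarrow>\<^sub>M count_space UNIV"
      by (rule measurable_compose[OF _ measurable_real_floor]) (rule measurable_completion, simp)
    show ?thesis unfolding G_def
      by (rule measurable_compose_countable[where g="\<lambda>y. \<lfloor>(y - a) / h n\<rfloor>" and f="\<lambda>i y. g (a + h n * of_int i)", OF _ fl]) simp
  qed
  have mo: "G n measurable_on {a..b}" for n
    using meas[of n] by (simp add: measurable_on_iff_borel_measurable measurable_restrict_space1)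
  have hlim: "h \<longlonglongrightarrow> 0"
    unfolding h_def using LIMSEQ_Suc[OF lim_const_over_n[of "b - a"]] by simp
  have lim: "(\<lambda>n. G n y) \<longlonglongrightarrow> g y" if y: "y \<in> {a..b} - D" for y
  proof (rule LIMSEQ_I)
    fix e :: real assume e: "e > 0"
    have "continuous (at y within {a..b}) g" using y by (auto simp: D_def)
    then obtain d where d: "d > 0" "\<And>x'. x' \<in> {a..b} \<Longrightarrow> dist x' y < d \<Longrightarrow> dist (g x') (g y) < e"
      unfolding continuous_within_eps_delta using e by metis
    obtain n0 where n0: "\<And>n. n \<ge> n0 \<Longrightarrow> norm (h n - 0) < d" using LIMSEQ_D[OF hlim d(1)] by metis
    show "\<exists>n0. \<forall>n\<ge>n0. norm (G n y - g y) < e"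
    proof (intro exI allI impI)
      fix n assume "n \<ge> n0"
      then have hn: "h n < d" using n0[of n] hpos[of n] by auto
      define k where "k = \<lfloor>(y - a) / h n\<rfloor>"
      have k1: "of_int k \<le> (y - a) / h n" and k2: "(y - a) / h n < of_int k + 1"
        unfolding k_def by linarith+
      have "h n * of_int k \<le> y - a" using k1 hpos[of n] by (simp add: field_simps)
      moreover have "y - a < h n * of_int k + h n" using k2 hpos[of n] by (simp add: field_simps)
      moreover have "0 \<le> k" unfolding k_def using y hpos[of n] by auto
      ultimately have "a + h n * of_int k \<in> {a..b}" "dist (a + h n * of_int k) y < d"
        using y hpos[of n] hn by (auto simp: dist_real_def)
      then show "norm (G n y - g y) < e" using d(2) by (simp add: G_def k_def dist_real_def)
    qed
  qed
  have neg: "negligible D"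
    using C unfolding D_def negligible_iff_null_sets
    by (intro null_sets_completionI countable_imp_null_set_lborel)
  have "g measurable_on {a..b}"
    by (rule measurable_on_limit[OF mo neg lim])
  then have "g \<in> borel_measurable (lebesgue_on {a..b})"
    by (simp add: measurable_on_iff_borel_measurable)
  then show ?thesis
    by (rule measurable_bounded_by_integrable_imp_integrable[where g="\<lambda>_. M"]) (auto simp: M)
qed


lemma riemann_of_regl:
  fixes g :: "real \<Rightarrow> real"
  assumes ab: "a < b" and M: "\<And>y. y \<in> {a..b} \<Longrightarrow> \<bar>g y\<bar> \<le> M" and Mpos: "M > 0"
    and gi: "g integrable_on {a..b}"
    and R: "\<And>e. e > 0 \<Longrightarrow> regl g a b e"
  shows "riemann_integrable_on g a b"
  unfolding riemann_integrable_on_def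
proof (rule exI[of _ "integral {a..b} g"], intro allI impI)
  fix e :: real assume e: "e > 0"
  define \<epsilon> where "\<epsilon> = e / (2 * (b - a))"
  have \<epsilon>: "\<epsilon> > 0" using e ab by (simp add: \<epsilon>_def)
  obtain F \<delta>0 where F: "finite F" and d0: "\<delta>0 > 0"
    and FD: "\<And>s t. s\<in>{a..b} \<Longrightarrow> t\<in>{a..b} \<Longrightarrow> \<bar>s - t\<bar> < \<delta>0 \<Longrightarrow>
      (\<forall>p\<in>F. p < min s t \<or> max s t < p) \<Longrightarrow> \<bar>g s - g t\<bar> \<le> \<epsilon>"
    using R[OF \<epsilon>] unfolding regl_def by metis
  define \<delta> where "\<delta> = min \<delta>0 (e / (8 * M * (card F + 1)))"
  have dpos: "\<delta> > 0" using d0 e Mpos by (simp add: \<delta>_def)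
  define ind where "ind p s = (if s \<in> {p - \<delta>..p + \<delta>} then 1 else (0::real))" for p s
  define h where "h s = \<epsilon> + 2 * M * (\<Sum>p\<in>F. ind p s)" for s
  have indi: "ind p integrable_on {u..v}" for p u v
    unfolding ind_def integrable_restrict_Int by (simp add: Int_atLeastAtMost integrable_const_ivl)
  have sumi: "(\<lambda>s. \<Sum>p\<in>F. ind p s) integrable_on {u..v}" for u v
    by (rule integrable_sum[OF F indi])
  have hi: "h integrable_on {u..v}" for u v
    unfolding h_def using integrable_add[OF integrable_const_ivl integrable_on_cmult_left[OF sumi, of "2*M"]] by simp
  have indint: "integral {a..b} (ind p) \<le> 2 * \<delta>" for p
  proof -
    have "integral {a..b} (ind p) = integral ({p - \<delta>..p + \<delta>} \<inter> {a..b}) (\<lambda>_. 1::real)"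
      unfolding ind_def integral_restrict_Int by simp
    also have "\<dots> = Henstock_Kurzweil_Integration.content ({max (p - \<delta>) a..min (p + \<delta>) b})"
      by (simp add: Int_atLeastAtMost)
    also have "\<dots> \<le> 2 * \<delta>" using dpos by (simp add: content_real) linarith
    finally show ?thesis .
  qed
  have hint: "integral {a..b} h \<le> e / 2 + e / 2 * (card F / (card F + 1))"
  proof -
    have "integral {a..b} h = \<epsilon> * (b - a) + 2 * M * (\<Sum>p\<in>F. integral {a..b} (ind p))"
      unfolding h_def using ab integrable_on_cmult_left[OF sumi, of "2*M" a b]
      by (subst integral_add) (auto simp: integral_sum[OF F indi] integral_mult[symmetric] sumi)
    also have "\<dots> \<le> \<epsilon> * (b - a) + 2 * M * (\<Sum>p\<in>F. 2 * \<delta>)"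
      using Mpos by (intro add_left_mono mult_left_mono sum_mono indint) auto
    also have "\<dots> = e / 2 + 4 * M * card F * \<delta>" using ab by (simp add: \<epsilon>_def field_simps)
    also have "\<dots> \<le> e / 2 + 4 * M * card F * (e / (8 * M * (card F + 1)))"
      using Mpos by (intro add_left_mono mult_left_mono) (auto simp: \<delta>_def)
    also have "\<dots> = e / 2 + e / 2 * (card F / (card F + 1))"
      using Mpos by (simp add: divide_simps) (simp add: algebra_simps)
    finally show ?thesis .
  qed
  have lt: "e / 2 * (card F / (card F + 1)) < e / 2" using e by (simp add: field_simps)
  show "\<exists>d>0. \<forall>D. D tagged_division_of {a..b} \<and> (\<forall>(t, K)\<in>D. diameter K < d) \<longrightarrow>
          \<bar>(\<Sum>(t, K)\<in>D. Henstock_Kurzweil_Integration.content K * g t) - integral {a..b} g\<bar> < e"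
  proof (intro exI[of _ \<delta>] conjI allI impI dpos)
    fix D assume D: "D tagged_division_of {a..b} \<and> (\<forall>(t, K)\<in>D. diameter K < \<delta>)"
    then have Dt: "D tagged_division_of cbox a b" by simp
    have fin: "finite D" using Dt by (rule tagged_division_ofD)
    have J: "integral {a..b} g = (\<Sum>(t, K)\<in>D. integral K g)"
      using integral_combine_tagged_division_topdown[of g a b D] gi Dt by simp
    have Jh: "integral {a..b} h = (\<Sum>(t, K)\<in>D. integral K h)"
      using integral_combine_tagged_division_topdown[of h a b D] hi[of a b] Dt by simp
    have termb: "\<bar>Henstock_Kurzweil_Integration.content K * g t - integral K g\<bar> \<le> integral K h" if tK: "(t, K) \<in> D" for t K
    proof -
      obtain u v where K: "K = {u..v}" using tagged_division_ofD(4)[OF Dt tK] by auto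
      have tK': "t \<in> K" and Ksub: "K \<subseteq> {a..b}" using tagged_division_ofD(2,3)[OF Dt tK] by auto
      have diam: "diameter K < \<delta>" using D tK by auto
      have gK: "g integrable_on K" using integrable_subinterval_real[OF gi] Ksub K by (auto)
      have eq: "Henstock_Kurzweil_Integration.content K * g t - integral K g = integral K (\<lambda>s. g t - g s)"
        using gK K by (simp add: integral_diff integrable_const_ivl)
      have bound: "norm (g t - g s) \<le> h s" if s: "s \<in> K" for s
      proof -
        have ds: "\<bar>s - t\<bar> < \<delta>" using diameter_bounded_bound[of K s t] s tK' diam K
          by (auto simp: dist_real_def)
        have sumnn: "(\<Sum>p\<in>F. ind p s) \<ge> 0" by (intro sum_nonneg) (auto simp: ind_def)
        show ?thesis
        proof (cases "\<exists>p\<in>F. p \<in> K")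
          case True
          then obtain p where p: "p \<in> F" "p \<in> K" by blast
          have "\<bar>s - p\<bar> < \<delta>" using diameter_bounded_bound[of K s p] s p diam K
            by (auto simp: dist_real_def)
          then have "ind p s = 1" by (auto simp: ind_def)
          then have one: "1 \<le> (\<Sum>p\<in>F. ind p s)"
            using member_le_sum[of p F "\<lambda>p. ind p s"] p F by (auto simp: ind_def)
          have "2 * M * 1 \<le> 2 * M * (\<Sum>p\<in>F. ind p s)"
            by (rule mult_left_mono[OF one]) (use Mpos in simp)
          moreover have "\<bar>g t - g s\<bar> \<le> 2 * M" using M[of t] M[of s] tK' s Ksub by (auto simp: subset_iff)
          ultimately show ?thesis using Mpos \<epsilon> unfolding h_def real_norm_def by linarith
        next
          case False
          have "\<forall>p\<in>F. p < min t s \<or> max t s < p"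
          proof
            fix p assume p: "p \<in> F"
            then have "p \<notin> K" using False by blast
            then show "p < min t s \<or> max t s < p" using s tK' K by auto
          qed
          then have "\<bar>g t - g s\<bar> \<le> \<epsilon>"
            using FD[of t s] tK' s Ksub ds diam \<delta>_def by (auto simp: subset_iff abs_minus_commute)
          then show ?thesis using Mpos sumnn unfolding h_def by (simp add: add_increasing2)
        qed
      qed
      have di: "(\<lambda>s. g t - g s) integrable_on K"
        using integrable_diff[OF integrable_const_ivl gK[unfolded K]] K by simp
      have "\<bar>integral K (\<lambda>s. g t - g s)\<bar> \<le> integral K h"
        using integral_norm_bound_integral[of "\<lambda>s. g t - g s" K h, OF di] K hi bound
        by auto
      then show ?thesis using eq by simp
    qed
    have "\<bar>(\<Sum>(t, K)\<in>D. Henstock_Kurzweil_Integration.content K * g t) - integral {a..b} g\<bar>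
        = \<bar>(\<Sum>(t, K)\<in>D. Henstock_Kurzweil_Integration.content K * g t - integral K g)\<bar>"
      unfolding J by (simp add: sum_subtractf split_def)
    also have "\<dots> \<le> (\<Sum>(t, K)\<in>D. \<bar>Henstock_Kurzweil_Integration.content K * g t - integral K g\<bar>)"
      by (rule order_trans[OF sum_abs]) (simp add: split_def)
    also have "\<dots> \<le> (\<Sum>(t, K)\<in>D. integral K h)"
      by (rule sum_mono) (use termb in auto)
    also have "\<dots> = integral {a..b} h" using Jh by simp
    finally show "\<bar>(\<Sum>(t, K)\<in>D. Henstock_Kurzweil_Integration.content K * g t) - integral {a..b} g\<bar> < e"
      using hint lt by linarith
  qed
qed


lemma piece:
  fixes x :: "nat \<Rightarrow> real"
  assumes incr: "\<And>i. i < N \<Longrightarrow> x i < x (Suc i)"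
    and y0: "x 0 < y" and yn: "y \<le> x n" and nN: "n \<le> N" and ny: "\<And>j. j \<le> N \<Longrightarrow> y \<noteq> x j"
  shows "\<exists>i. 1 \<le> i \<and> i \<le> n \<and> x (i-1) < y \<and> y < x i"
  using yn nN
proof (induction n)
  case 0 then show ?case using y0 by simp
next
  case (Suc n)
  show ?case
  proof (cases "y \<le> x n")
    case True then show ?thesis using Suc by force
  next
    case False
    then have "y < x (Suc n)" using Suc.prems ny[of "Suc n"] by auto
    then show ?thesis using False by (intro exI[of _ "Suc n"]) auto
  qed
qed

lemma xmono:
  fixes x :: "nat \<Rightarrow> real"
  assumes incr: "\<And>i. i < N \<Longrightarrow> x i < x (Suc i)"
  shows "i < j \<Longrightarrow> j \<le> N \<Longrightarrow> x i < x j"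
proof (induction j)
  case 0 then show ?case by simp
next
  case (Suc j)
  show ?case
  proof (cases "i = j")
    case True then show ?thesis using incr Suc.prems by auto
  next
    case False then show ?thesis using Suc incr[of j] by auto
  qed
qed

lemma regl_step:
  fixes N :: nat and x :: "nat \<Rightarrow> real" and \<alpha> :: "nat \<Rightarrow> real"
    and q :: "nat \<Rightarrow> real \<Rightarrow> real" and f :: "real \<Rightarrow> real"
  assumes N: "N \<ge> 2"
    and incr: "\<And>i. i < N \<Longrightarrow> x i < x (Suc i)"
    and lam: "\<And>i. 1 \<le> i \<Longrightarrow> i \<le> N \<Longrightarrow> \<bar>\<alpha> i\<bar> \<le> lam"
    and C: "\<And>i. 1 \<le> i \<Longrightarrow> i \<le> N \<Longrightarrow> (C i)-lipschitz_on {x 0..x N} (q i)"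
    and K: "\<And>i. 1 \<le> i \<Longrightarrow> i \<le> N \<Longrightarrow> C i \<le> K" and Kpos: "K > 0"
    and fe: "\<And>i y. 1 \<le> i \<Longrightarrow> i \<le> N \<Longrightarrow>
              y \<in> (if i < N then {x (i-1)..<x i} else {x (N-1)..x N}) \<Longrightarrow>
              (let a = (x i - x (i-1)) / (x N - x 0);
                   b = (x N * x (i-1) - x 0 * x i) / (x N - x 0)
               in f y = \<alpha> i * f ((y - b) / a) + q i ((y - b) / a))"
    and R: "regl f (x 0) (x N) \<epsilon>" and e0: "\<epsilon> \<ge> 0" and eta: "\<eta> > 0"
  shows "regl f (x 0) (x N) (lam * \<epsilon> + \<eta>)"
proof -
  define A where "A i = (x i - x (i-1)) / (x N - x 0)" for i
  define B where "B i = (x N * x (i-1) - x 0 * x i) / (x N - x 0)" for i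
  have ab: "x 0 < x N" using xmono[where N=N and x=x, OF incr, of 0 N] N by simp
  have Apos: "A i > 0" if "1 \<le> i" "i \<le> N" for i
    using xmono[where N=N and x=x, OF incr, of "i-1" i] that ab by (simp add: A_def)
  have nz: "x N - x 0 \<noteq> 0" using ab by simp
  have La: "A i * x 0 + B i = x (i-1)" for i
  proof -
    have "A i * x 0 + B i = (x (i-1) * (x N - x 0)) / (x N - x 0)"
      unfolding A_def B_def by (simp add: add_divide_distrib[symmetric] algebra_simps)
    then show ?thesis using nz by simp
  qed
  have Lb: "A i * x N + B i = x i" for i
  proof -
    have "A i * x N + B i = (x i * (x N - x 0)) / (x N - x 0)"
      unfolding A_def B_def by (simp add: add_divide_distrib[symmetric] algebra_simps)
    then show ?thesis using nz by simp
  qed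
  have key: "(y - B i) / A i - p = (y - (A i * p + B i)) / A i" if "A i > 0" for i y p
    using that by (simp add: field_simps)
  obtain F \<delta> where F: "finite F" and d0: "\<delta> > 0"
    and FD: "\<And>s t. s\<in>{x 0..x N} \<Longrightarrow> t\<in>{x 0..x N} \<Longrightarrow> \<bar>s - t\<bar> < \<delta> \<Longrightarrow>
      (\<forall>p\<in>F. p < min s t \<or> max s t < p) \<Longrightarrow> \<bar>f s - f t\<bar> \<le> \<epsilon>"
    using R unfolding regl_def by metis
  define d where "d = min \<delta> (\<eta> / K)"
  have dpos: "d > 0" using d0 eta Kpos by (simp add: d_def)
  define \<delta>' where "\<delta>' = Min ((\<lambda>i. A i * d) ` {1..N})"
  have d'pos: "\<delta>' > 0" unfolding \<delta>'_def using N Apos dpos by (subst Min_gr_iff) auto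
  have d'le: "\<delta>' \<le> A i * d" if "1 \<le> i" "i \<le> N" for i
    unfolding \<delta>'_def using that by (intro Min_le) auto
  define F' where "F' = x ` {..N} \<union> (\<Union>i\<in>{1..N}. (\<lambda>p. A i * p + B i) ` F)"
  have F'fin: "finite F'" unfolding F'_def using F by auto
  show ?thesis
    unfolding regl_def
  proof (intro exI[of _ F'] exI[of _ \<delta>'] conjI F'fin d'pos ballI impI)
    fix s t assume s: "s \<in> {x 0..x N}" and t: "t \<in> {x 0..x N}" and st: "\<bar>s - t\<bar> < \<delta>'"
      and av: "\<forall>p\<in>F'. p < min s t \<or> max s t < p"
    have nx: "s \<noteq> x j" if "j \<le> N" for j
      using av that unfolding F'_def by force
    have s0: "x 0 < s" using s nx[of 0] by auto
    obtain i where i: "1 \<le> i" "i \<le> N" "x (i-1) < s" "s < x i"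
      using piece[where N=N and x=x, OF incr s0 _ order_refl nx] s by auto
    have xi1: "x (i-1) \<in> F'" "x i \<in> F'" unfolding F'_def using i by auto
    have ti: "x (i-1) < t" "t < x i" using av xi1 i by force+
    have inI: "y \<in> (if i < N then {x (i-1)..<x i} else {x (N-1)..x N})"
      if "x (i-1) < y" "y < x i" for y using that i by (auto simp: not_less)
    have A0: "A i > 0" using Apos i by simp
    define s' where "s' = (s - B i) / A i"
    define t' where "t' = (t - B i) / A i"
    have fs: "f s = \<alpha> i * f s' + q i s'"
      using fe[OF i(1,2) inI[OF i(3,4)]] unfolding s'_def A_def B_def Let_def by simp
    have ft: "f t = \<alpha> i * f t' + q i t'"
      using fe[OF i(1,2) inI[OF ti]] unfolding t'_def A_def B_def Let_def by simp
    have s'I: "s' \<in> {x 0..x N}"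
    proof -
      have "s' - x 0 = (s - x (i-1)) / A i" unfolding s'_def using key[OF A0] La by simp
      moreover have "s' - x N = (s - x i) / A i" unfolding s'_def using key[OF A0] Lb by simp
      moreover have "(s - x (i-1)) / A i \<ge> 0" "(s - x i) / A i \<le> 0"
        using i ti A0 by (auto intro: divide_nonneg_pos divide_nonpos_pos)
      ultimately show ?thesis by auto
    qed
    have t'I: "t' \<in> {x 0..x N}"
    proof -
      have "t' - x 0 = (t - x (i-1)) / A i" unfolding t'_def using key[OF A0] La by simp
      moreover have "t' - x N = (t - x i) / A i" unfolding t'_def using key[OF A0] Lb by simp
      moreover have "(t - x (i-1)) / A i \<ge> 0" "(t - x i) / A i \<le> 0"
        using i ti A0 by (auto intro: divide_nonneg_pos divide_nonpos_pos)
      ultimately show ?thesis by auto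
    qed
    have "s' - t' = (s - t) / A i" unfolding s'_def t'_def using A0 by (simp add: field_simps)
    then have dst: "\<bar>s' - t'\<bar> = \<bar>s - t\<bar> / A i" using A0 by simp
    have "\<bar>s - t\<bar> < A i * d" using st d'le[OF i(1,2)] by simp
    then have dst2: "\<bar>s' - t'\<bar> < d" using dst A0 by (simp add: divide_simps mult.commute) (metis mult.commute mult_less_cancel_left_pos)
    have av': "\<forall>p\<in>F. p < min s' t' \<or> max s' t' < p"
    proof
      fix p assume p: "p \<in> F"
      have "A i * p + B i \<in> F'" unfolding F'_def using p i by auto
      then have c: "A i * p + B i < min s t \<or> max s t < A i * p + B i" using av by blast
      have "s' - p = (s - (A i * p + B i)) / A i" "t' - p = (t - (A i * p + B i)) / A i"
        unfolding s'_def t'_def using key[OF A0] by auto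
      then have "p < s' \<longleftrightarrow> A i * p + B i < s" "s' < p \<longleftrightarrow> s < A i * p + B i"
        "p < t' \<longleftrightarrow> A i * p + B i < t" "t' < p \<longleftrightarrow> t < A i * p + B i"
        using A0 by (smt (verit) divide_less_0_iff zero_less_divide_iff)+
      then show "p < min s' t' \<or> max s' t' < p" using c by auto
    qed
    have f1: "\<bar>f s' - f t'\<bar> \<le> \<epsilon>"
      using FD[OF s'I t'I _ av'] dst2 d_def by auto
    have q1: "\<bar>q i s' - q i t'\<bar> \<le> C i * \<bar>s' - t'\<bar>"
      using C[OF i(1,2)] s'I t'I unfolding lipschitz_on_def dist_real_def by blast
    have Ci: "0 \<le> C i" "C i \<le> K" using C[OF i(1,2)] K[OF i(1,2)] unfolding lipschitz_on_def by auto
    have "C i * \<bar>s' - t'\<bar> \<le> K * d" using Ci dst2 by (intro mult_mono) auto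
    also have "K * d \<le> \<eta>" using Kpos unfolding d_def by (simp add: min_def field_simps)
    finally have q2: "\<bar>q i s' - q i t'\<bar> \<le> \<eta>" using q1 by linarith
    have a1: "\<bar>\<alpha> i * (f s' - f t')\<bar> \<le> lam * \<epsilon>"
      unfolding abs_mult using lam[OF i(1,2)] f1 e0 by (intro mult_mono) auto
    have "f s - f t = \<alpha> i * (f s' - f t') + (q i s' - q i t')"
      unfolding fs ft by (simp add: algebra_simps)
    then show "\<bar>f s - f t\<bar> \<le> lam * \<epsilon> + \<eta>" using a1 q2 by linarith
  qed
qed


theorem mainTheorem6:
  fixes N :: nat and x :: "nat \<Rightarrow> real" and \<alpha> :: "nat \<Rightarrow> real"
    and q :: "nat \<Rightarrow> real \<Rightarrow> real" and f :: "real \<Rightarrow> real"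
  assumes N: "N \<ge> 2"
    and incr: "\<And>i. i < N \<Longrightarrow> x i < x (Suc i)"
    and alpha: "\<And>i. 1 \<le> i \<Longrightarrow> i \<le> N \<Longrightarrow> \<alpha> i \<in> {-1<..<1}"
    and lip: "\<And>i. 1 \<le> i \<Longrightarrow> i \<le> N \<Longrightarrow> \<exists>C. C-lipschitz_on {x 0..x N} (q i)"
    and bdd: "bounded (f ` {x 0..x N})"
    and fe: "\<And>i y. 1 \<le> i \<Longrightarrow> i \<le> N \<Longrightarrow>
              y \<in> (if i < N then {x (i-1)..<x i} else {x (N-1)..x N}) \<Longrightarrow>
              (let a = (x i - x (i-1)) / (x N - x 0);
                   b = (x N * x (i-1) - x 0 * x i) / (x N - x 0)
               in f y = \<alpha> i * f ((y - b) / a) + q i ((y - b) / a))"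
  shows "{y \<in> {x 0..x N}. \<not> continuous (at y within {x 0..x N}) f} \<in> null_sets lebesgue
         \<and> riemann_integrable_on f (x 0) (x N)"
proof -
  have ab: "x 0 < x N" using xmono[where N=N and x=x, OF incr, of 0 N] N by simp
  obtain M where Mpos: "M > 0" and M: "\<And>y. y \<in> {x 0..x N} \<Longrightarrow> \<bar>f y\<bar> \<le> M"
    using bdd unfolding bounded_pos by auto
  define lam where "lam = Max ((\<lambda>i. \<bar>\<alpha> i\<bar>) ` {1..N})"
  have lam1: "lam < 1" unfolding lam_def using N alpha by (subst Max_less_iff) (auto simp: abs_less_iff)
  have lam0: "lam \<ge> 0" unfolding lam_def using N by (intro order_trans[OF abs_ge_zero Max_ge[of _ "\<bar>\<alpha> 1\<bar>"]]) auto
  have lamge: "\<bar>\<alpha> i\<bar> \<le> lam" if "1 \<le> i" "i \<le> N" for i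
    unfolding lam_def using that by (intro Max_ge) auto
  obtain C where C: "\<And>i. 1 \<le> i \<Longrightarrow> i \<le> N \<Longrightarrow> (C i)-lipschitz_on {x 0..x N} (q i)"
    using lip by metis
  define K where "K = 1 + (\<Sum>i\<in>{1..N}. C i)"
  have C0: "C i \<ge> 0" if "1 \<le> i" "i \<le> N" for i using C[OF that] unfolding lipschitz_on_def by auto
  have Kge: "C i \<le> K" if "1 \<le> i" "i \<le> N" for i
  proof -
    have "C i \<le> (\<Sum>i\<in>{1..N}. C i)" using that C0 by (intro member_le_sum) auto
    then show ?thesis unfolding K_def by simp
  qed
  have Kpos: "K > 0" unfolding K_def using C0 by (smt (verit) atLeastAtMost_iff sum_nonneg)
  define \<mu> where "\<mu> = (1 + lam) / 2"
  have mu: "0 \<le> \<mu>" "\<mu> < 1" using lam0 lam1 by (auto simp: \<mu>_def)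
  have base: "regl f (x 0) (x N) (2 * M)"
    unfolding regl_def
    by (intro exI[of _ "{}"] exI[of _ 1]) (auto intro!: order_trans[OF abs_triangle_ineq4], smt (verit) M atLeastAtMost_iff)
  have lev: "regl f (x 0) (x N) (2 * M * \<mu> ^ n)" for n
  proof (induction n)
    case 0 then show ?case using base by simp
  next
    case (Suc n)
    have epos: "2 * M * \<mu> ^ n \<ge> 0" using Mpos mu by simp
    have "regl f (x 0) (x N) (lam * (2 * M * \<mu> ^ n) + (1 - lam) / 2 * (2 * M * \<mu> ^ n))"
    proof -
      have "\<mu> ^ n > 0" using lam0 by (simp add: \<mu>_def)
      then have "(1 - lam) / 2 * (2 * M * \<mu> ^ n) > 0" using lam1 Mpos by simp
      then show ?thesis
        using regl_step[OF N incr lamge C Kge Kpos fe Suc.IH epos] by blast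
    qed
    moreover have "lam * (2 * M * \<mu> ^ n) + (1 - lam) / 2 * (2 * M * \<mu> ^ n) = 2 * M * \<mu> ^ Suc n"
      by (simp add: \<mu>_def field_simps)
    ultimately show ?case by simp
  qed
  have R: "regl f (x 0) (x N) e" if e: "e > 0" for e
  proof -
    obtain n where "\<mu> ^ n < e / (2 * M)" using real_arch_pow_inv[of "e / (2*M)" \<mu>] e Mpos mu by auto
    then have "2 * M * \<mu> ^ n \<le> e" using Mpos by (simp add: field_simps)
    then show ?thesis using regl_mono[OF lev] by blast
  qed
  have cnt: "countable {y \<in> {x 0..x N}. \<not> continuous (at y within {x 0..x N}) f}"
    by (rule disc_countable[OF R])
  have "{y \<in> {x 0..x N}. \<not> continuous (at y within {x 0..x N}) f} \<in> null_sets lebesgue"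
    by (intro null_sets_completionI countable_imp_null_set_lborel cnt)
  moreover have "f integrable_on {x 0..x N}"
    by (rule integrable_of_countable_disc[OF ab M cnt])
  then have "riemann_integrable_on f (x 0) (x N)"
    using riemann_of_regl[OF ab M Mpos _ R] by blast
  ultimately show ?thesis by simp
qed

end
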